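(* Let $\Gamma$ be a connected signed graph on $N$ vertices and $t^*\in\mathbb{R}$. The dimension of the kernel of $\mathcal{L}(\Gamma(t^* ))$ restricted to $\mathbf{1}^\perp=\{v\in\mathbb{R}^N:\sum_iv_i=0\}$ equals the multiplicity of $t^*$ as a root of the polynomial $t\mapsto \mathcal{M}(\Gamma(t))$.
   Context: A signed graph $\Gamma$ is a finite simple undirected graph with vertex set $\{1,\dots,N\}$ in which every edge $\{i,j\}$ carries a nonzero real weight $\gamma_{ij}$, which may be of either sign. For real $t$, $\Gamma(t)$ is the weighted graph with the same edges and weights $\gamma_{ij}(t)=\gamma_{ij}$ if $\gamma_{ij}>0$ and $\gamma_{ij}(t)=t\gamma_{ij}$ if $\gamma_{ij}<0$. For a weighted graph $H$ with weights $w_{ij}$, its Laplacian $\mathcal{L}(H)$ has off-diagonal entries $w_{ij}$ (zero for non-edges) and diagonal entries $-\sum_{k\neq i}w_{ik}$, and $\mathcal{M}(H)=\sum_T\prod_{e\in E(T)}w(e)$ summed over spanning trees $T$ of $H$; equivalently $\mathcal{M}(H)=\frac{(-1)^{n-1}}{n}\prod_{i=2}^n\lambda_i$ where $n=|V(H)|$ and $\lambda_1=0,\lambda_2,\dots,\lambda_n$ are the eigenvalues of $\mathcal{L}(H)$. *)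

theory Defs
  imports "HOL-Analysis.Analysis" "HOL-Computational_Algebra.Polynomial"
begin

text \<open>A signed graph on the finite vertex type 'n (N = CARD('n) vertices) is given by a
symmetric weight function with zero diagonal; the edges are the pairs with nonzero weight.\<close>

definition signed_graph :: "('n::finite \<Rightarrow> 'n \<Rightarrow> real) \<Rightarrow> bool" where
  "signed_graph g \<longleftrightarrow> (\<forall>i j. g i j = g j i) \<and> (\<forall>i. g i i = 0)"

definition edges :: "('n \<Rightarrow> 'n \<Rightarrow> 'a::zero) \<Rightarrow> 'n set set" where
  "edges g = {{i, j} | i j. i \<noteq> j \<and> g i j \<noteq> 0}"

definition adj :: "'n set set \<Rightarrow> ('n \<times> 'n) set" where
  "adj F = {(u, v). {u, v} \<in> F}"

definition connected_by :: "'n set set \<Rightarrow> bool" where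
  "connected_by F \<longleftrightarrow> (\<forall>u v. (u, v) \<in> (adj F)\<^sup>*)"

definition graph_connected :: "('n::finite \<Rightarrow> 'n \<Rightarrow> 'a::zero) \<Rightarrow> bool" where
  "graph_connected g \<longleftrightarrow> connected_by (edges g)"

definition spanning_trees :: "'n::finite set set \<Rightarrow> 'n set set set" where
  "spanning_trees E = {T. T \<subseteq> E \<and> connected_by T \<and> card T = CARD('n) - 1}"

text \<open>The two endpoints of an edge (an unordered pair); the weight is symmetric so the
choice of order is irrelevant.\<close>
definition ends :: "'n set \<Rightarrow> 'n \<times> 'n" where
  "ends e = (SOME p. e = {fst p, snd p} \<and> fst p \<noteq> snd p)"

definition edge_weight :: "('n \<Rightarrow> 'n \<Rightarrow> 'a) \<Rightarrow> 'n set \<Rightarrow> 'a" where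
  "edge_weight g e = g (fst (ends e)) (snd (ends e))"

text \<open>M(H) = sum over spanning trees of the product of the edge weights, for weights in any
commutative ring (used with real weights and with polynomial weights).\<close>
definition M :: "'n::finite set set \<Rightarrow> ('n set \<Rightarrow> 'a::comm_ring_1) \<Rightarrow> 'a" where
  "M E w = (\<Sum>T\<in>spanning_trees E. \<Prod>e\<in>T. w e)"

definition gamma_t :: "('n \<Rightarrow> 'n \<Rightarrow> real) \<Rightarrow> real \<Rightarrow> 'n \<Rightarrow> 'n \<Rightarrow> real" where
  "gamma_t g t i j = (if g i j > 0 then g i j else t * g i j)"

definition gamma_poly :: "('n \<Rightarrow> 'n \<Rightarrow> real) \<Rightarrow> 'n \<Rightarrow> 'n \<Rightarrow> real poly" where
  "gamma_poly g i j = (if g i j > 0 then [:g i j:] else [:0, g i j:])"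

definition M_poly :: "('n::finite \<Rightarrow> 'n \<Rightarrow> real) \<Rightarrow> real poly" where
  "M_poly g = M (edges g) (edge_weight (gamma_poly g))"

definition laplacian :: "('n::finite \<Rightarrow> 'n \<Rightarrow> real) \<Rightarrow> real^'n^'n" where
  "laplacian w = (\<chi> i j. if i = j then - (\<Sum>k\<in>UNIV - {i}. w i k) else w i j)"

end

theory Submission
  imports Defs
begin


lemma poly_det: "poly (det (P :: real poly^'n^'n)) x = det (\<chi> i j. poly (P$i$j) x)"
  unfolding det_def by (simp add: poly_sum poly_prod of_int_poly)

lemma det_nz_iff_ker:
  fixes P :: "real^'n^'n"
  shows "det P \<noteq> 0 \<longleftrightarrow> (\<forall>x. P *v x = 0 \<longrightarrow> x = 0)"
proof -
  have "det P \<noteq> 0 \<longleftrightarrow> inj ((*v) P)"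
    using det_nz_iff_inj[of "(*v) P"] by (simp add: matrix_of_matrix_vector_mul)
  also have "\<dots> \<longleftrightarrow> (\<forall>x. P *v x = 0 \<longrightarrow> x = 0)"
    apply (simp add: inj_on_def, safe)
     apply (metis matrix_vector_mult_0_right)
    by (metis matrix_vector_mult_diff_distrib right_minus_eq)
  finally show ?thesis .
qed

lemma scaleR_is_smult: "(c::real) *s (v::real^'n) = c *\<^sub>R v"
  by (simp add: vec_eq_iff)

lemma basis_matrix:
  fixes N :: "(real^'n) set" assumes sN: "subspace N"
  obtains Q :: "real^'n^'n" and K :: "'n set" where "det Q \<noteq> 0" "card K = dim N"
    "\<And>j. j \<in> K \<Longrightarrow> Q *v axis j 1 \<in> N"
    "\<And>v. v \<in> N \<Longrightarrow> \<exists>c. v = Q *v c \<and> (\<forall>j. j \<notin> K \<longrightarrow> c$j = 0)"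
proof -
  obtain BN where BN: "BN \<subseteq> N" "independent BN" "N \<subseteq> span BN" "card BN = dim N"
    by (rule basis_exists)
  define BB where "BB = extend_basis BN"
  have BB: "BN \<subseteq> BB" "independent BB" "span BB = UNIV"
    using BN(2) BB_def extend_basis_superset independent_extend_basis span_extend_basis by auto
  have finBB: "finite BB" using BB(2) independent_imp_finite by blast
  have finBN: "finite BN" using finBB BB(1) finite_subset by blast
  have "card BB = dim (span BB)" using BB(2) dim_eq_card_independent dim_span by metis
  also have "\<dots> = CARD('n)" unfolding BB(3) dim_UNIV by simp
  finally have cardBB: "card BB = CARD('n)" .
  have "card BN \<le> card (UNIV :: 'n set)" using cardBB BB(1) finBB card_mono by metis
  then obtain K :: "'n set" where K: "card K = card BN" "finite K"
    by (metis obtain_subset_with_card_n)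
  obtain f1 where f1: "bij_betw f1 K BN" using K finBN finite_same_card_bij by metis
  have "card (UNIV - K) = card (BB - BN)"
    using cardBB K finBN BB(1) by (simp add: card_Diff_subset)
  then obtain f2 where f2: "bij_betw f2 (UNIV - K) (BB - BN)"
    using finBB finite_same_card_bij by (metis finite finite_Diff)
  define \<beta> where "\<beta> j = (if j \<in> K then f1 j else f2 j)" for j
  have b1: "bij_betw \<beta> K BN" using f1 unfolding \<beta>_def bij_betw_def inj_on_def by auto
  have b2: "bij_betw \<beta> (UNIV - K) (BB - BN)" using f2 unfolding \<beta>_def bij_betw_def inj_on_def by auto
  have "bij_betw \<beta> (K \<union> (UNIV - K)) (BN \<union> (BB - BN))"
    by (rule bij_betw_combine[OF b1 b2]) auto
  then have bij: "bij_betw \<beta> UNIV BB" using BB(1) by (simp add: Un_absorb1 Un_Diff_cancel)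
  define Q :: "real^'n^'n" where "Q = (\<chi> i j. \<beta> j $ i)"
  have Qv: "Q *v c = (\<Sum>j\<in>UNIV. c$j *\<^sub>R \<beta> j)" for c
    unfolding matrix_mult_sum scaleR_is_smult Q_def by (simp add: column_def)
  have inj: "c = 0" if "Q *v c = 0" for c
  proof -
    let ?u = "\<lambda>b. c $ (inv_into UNIV \<beta> b)"
    have "(\<Sum>b\<in>BB. ?u b *\<^sub>R b) = (\<Sum>j\<in>UNIV. c$j *\<^sub>R \<beta> j)"
      using bij by (simp add: sum.reindex_bij_betw[symmetric, OF bij] bij_betw_inv_into_left)
    then have "(\<Sum>b\<in>BB. ?u b *\<^sub>R b) = 0" using that Qv by simp
    then have "\<forall>b\<in>BB. ?u b = 0"
    proof (rule contrapos_pp)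
      assume "\<not> (\<forall>b\<in>BB. ?u b = 0)"
      then have "\<exists>v\<in>BB. ?u v \<noteq> 0" by blast
      then show "(\<Sum>b\<in>BB. ?u b *\<^sub>R b) \<noteq> 0"
      proof (intro notI)
        assume "\<exists>v\<in>BB. ?u v \<noteq> 0" "(\<Sum>b\<in>BB. ?u b *\<^sub>R b) = 0"
        then have "dependent BB" unfolding dependent_finite[OF finBB] by (intro exI[of _ ?u]) simp
        with BB(2) show False by simp
      qed
    qed
    moreover have "\<beta> j \<in> BB" "inv \<beta> (\<beta> j) = j" for j
      using bij bij_betw_apply bij_betw_inv_into_left by fastforce+
    ultimately show "c = 0" unfolding vec_eq_iff by (metis zero_index)
  qed
  show ?thesis
  proof
    show "det Q \<noteq> 0" using inj det_nz_iff_ker by blast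
    show "card K = dim N" using K BN by simp
    show "Q *v axis j 1 \<in> N" if "j \<in> K" for j
    proof -
      have "Q *v axis j 1 = \<beta> j" unfolding Q_def
        by (simp add: vec_eq_iff matrix_vector_mult_def axis_def if_distrib cong: if_cong)
      then show ?thesis using b1 that BN(1) bij_betw_apply by fastforce
    qed
    show "\<exists>c. v = Q *v c \<and> (\<forall>j. j \<notin> K \<longrightarrow> c$j = 0)" if vN: "v \<in> N" for v
    proof -
      obtain u where u: "v = (\<Sum>b\<in>BN. u b *\<^sub>R b)"
        using vN BN(3) span_finite[OF finBN] by blast
      define c :: "real^'n" where "c = (\<chi> j. if j \<in> K then u (\<beta> j) else 0)"
      have "Q *v c = (\<Sum>j\<in>UNIV. c$j *\<^sub>R \<beta> j)" by (rule Qv)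
      also have "\<dots> = (\<Sum>j\<in>K. u (\<beta> j) *\<^sub>R \<beta> j)"
        unfolding c_def by (simp add: sum.If_cases K(2) if_distrib[of "\<lambda>x. x *\<^sub>R _"])
      also have "\<dots> = (\<Sum>b\<in>BN. u b *\<^sub>R b)"
        using sum.reindex_bij_betw[OF b1, of "\<lambda>b. u b *\<^sub>R b"] by simp
      finally show ?thesis using u unfolding c_def by (intro exI[of _ c]) (auto simp: c_def)
    qed
  qed
qed

lemma smv: "((c::real) *\<^sub>R (Mx::real^'n^'m)) *v x = c *\<^sub>R (Mx *v x)"
  by (simp add: vec_eq_iff matrix_vector_mult_def sum_distrib_left mult.assoc)

lemma sum_pCons2: "finite S \<Longrightarrow> (\<Sum>k\<in>S. [:f k, g k:]) = [:(\<Sum>k\<in>S. f k), (\<Sum>k\<in>S. g k):]"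
  by (induct S rule: finite_induct) auto

lemma sym_inner:
  fixes A :: "real^'n^'n"
  assumes "transpose A = A"
  shows "u \<bullet> (A *v w) = (A *v u) \<bullet> w"
  by (metis assms dot_lmul_matrix vector_transpose_matrix)

lemma prod_if_const: "finite S \<Longrightarrow> (\<Prod>j\<in>S. if j \<in> K then p else 1) = p ^ card (S \<inter> K)"
  by (simp add: prod.If_cases)

lemma mat_axis_entry: "((Mx::real^'n^'n) ** Q) $ i $ j = (Mx *v (Q *v axis j 1)) $ i"
  unfolding matrix_vector_mult_basis column_def by (simp add: matrix_matrix_mult_def matrix_vector_mult_def)

lemma pencil_order:
  fixes C D :: "real^'n^'n" and a :: real
  assumes symA: "transpose (C + a *\<^sub>R D) = C + a *\<^sub>R D"
    and Dq: "\<And>x. x \<bullet> (D *v x) = 0 \<Longrightarrow> D *v x = 0"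
    and nz: "det (\<chi> i j. [:C$i$j, D$i$j:]) \<noteq> 0"
  shows "order a (det (\<chi> i j. [:C$i$j, D$i$j:])) = dim {x. (C + a *\<^sub>R D) *v x = 0}"
proof -
  define A where "A = C + a *\<^sub>R D"
  define PP :: "real poly^'n^'n" where "PP = (\<chi> i j. [:C$i$j, D$i$j:])"
  define N where "N = {x. A *v x = 0}"
  have sN: "subspace N" unfolding N_def
    by (rule linear_subspace_kernel) (simp add: matrix_vector_mul_linear)
  obtain Q :: "real^'n^'n" and K where Q: "det Q \<noteq> 0" "card K = dim N"
    "\<And>j. j \<in> K \<Longrightarrow> Q *v axis j 1 \<in> N"
    "\<And>v. v \<in> N \<Longrightarrow> \<exists>c. v = Q *v c \<and> (\<forall>j. j \<notin> K \<longrightarrow> c$j = 0)"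
    using basis_matrix[OF sN] by blast
  define Qp :: "real poly^'n^'n" where "Qp = (\<chi> i j. [:Q$i$j:])"
  have detQp: "det Qp = [:det Q:]"
    by (rule poly_eq_poly_eq_iff[THEN iffD1], rule ext) (simp add: poly_det Qp_def)
  have AQ0: "(A ** Q) $ i $ j = 0" if "j \<in> K" for i j
    using Q(3)[OF that] unfolding mat_axis_entry N_def by simp
  have AQ: "A ** Q = C ** Q + a *\<^sub>R (D ** Q)" unfolding A_def
    by (simp add: vec_eq_iff matrix_matrix_mult_def sum_distrib_left distrib_right sum.distrib mult.assoc)
  have PQ: "(PP ** Qp) $ i $ j = [:(C ** Q)$i$j, (D ** Q)$i$j:]" for i j
    unfolding PP_def Qp_def matrix_matrix_mult_def
    by (simp add: sum_pCons2 mult.commute)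
  define R :: "real poly^'n^'n" where
    "R = (\<chi> j i. if j \<in> K then [:(D ** Q)$i$j:] else [:(C ** Q)$i$j, (D ** Q)$i$j:])"
  define cf where "cf j = (if j \<in> K then [:-a, 1:] else 1)" for j
  have T: "transpose (PP ** Qp) = (\<chi> j. cf j *s R $ j)"
  proof -
    have "(C ** Q)$i$j = - a * (D ** Q)$i$j" if "j \<in> K" for i j
      using AQ0[OF that, of i] unfolding AQ by simp
    then show ?thesis
      by (simp add: vec_eq_iff transpose_def PQ R_def cf_def)
  qed
  have "det (PP ** Qp) = [:-a, 1:] ^ card K * det R"
  proof -
    have "det (PP ** Qp) = det (transpose (PP ** Qp))" by simp
    also have "\<dots> = prod cf UNIV * det (\<chi> j. R $ j)" unfolding T by (rule det_rows_mul)
    also have "prod cf UNIV = [:-a, 1:] ^ card K" unfolding cf_def by (simp add: prod_if_const)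
    finally show ?thesis by simp
  qed
  then have eq: "smult (det Q) (det PP) = [:-a, 1:] ^ card K * det R"
    by (simp add: det_mul detQp)
  have polyR: "poly (det R) a \<noteq> 0"
  proof -
    define Rv :: "real^'n^'n" where "Rv = (\<chi> j i. if j \<in> K then (D ** Q)$i$j else (A ** Q)$i$j)"
    have "poly (det R) a = det Rv" unfolding poly_det R_def Rv_def AQ
      by (rule arg_cong[of _ _ det]) (simp add: vec_eq_iff algebra_simps if_distrib[of "\<lambda>p. poly p _"] cong: if_cong)
    also have "det Rv \<noteq> 0"
    proof -
      have "x = 0" if x: "transpose Rv *v x = 0" for x
      proof -
        define xK :: "real^'n" where "xK = (\<chi> j. if j \<in> K then x$j else 0)"
        define xN :: "real^'n" where "xN = (\<chi> j. if j \<in> K then 0 else x$j)"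
        have "transpose Rv *v x = (D ** Q) *v xK + (A ** Q) *v xN"
          unfolding Rv_def xK_def xN_def
          by (simp add: vec_eq_iff matrix_vector_mult_def transpose_def sum.distrib[symmetric]
              if_distrib[of "\<lambda>y. y * _"] if_distrib[of "\<lambda>y. _ * y"] cong: if_cong)
            (intro allI sum.cong, auto)
        then have eq0: "D *v (Q *v xK) + A *v (Q *v xN) = 0"
          using x by (simp add: matrix_vector_mul_assoc)
        define u where "u = Q *v xK"
        define w where "w = Q *v xN"
        have Au: "A *v u = 0"
          unfolding u_def matrix_vector_mul_assoc
          by (simp add: vec_eq_iff matrix_vector_mult_def xK_def AQ0 if_distrib[of "\<lambda>y. _ * y"] cong: if_cong)
        have "u \<bullet> (D *v u) = - (u \<bullet> (A *v w))"
        proof -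
          have "D *v u = - (A *v w)" using eq0 unfolding u_def[symmetric] w_def[symmetric]
            by (simp add: eq_neg_iff_add_eq_0)
          then show ?thesis by simp
        qed
        also have "u \<bullet> (A *v w) = 0" using sym_inner[OF symA[folded A_def]] Au by simp
        finally have Du: "D *v u = 0" using Dq by simp
        have Cu: "C *v u = 0" using Au Du unfolding A_def
          by (simp add: matrix_vector_mult_add_rdistrib smv)
        have u0: "u = 0"
        proof (rule ccontr)
          assume "u \<noteq> 0"
          have "poly (det PP) s = 0" for s
          proof -
            have "(\<chi> i j. poly (PP$i$j) s) = C + s *\<^sub>R D"
              unfolding PP_def by (simp add: vec_eq_iff)
            moreover have "(C + s *\<^sub>R D) *v u = 0"
              using Cu Du by (simp add: matrix_vector_mult_add_rdistrib smv)
            ultimately show ?thesis unfolding poly_det using det_nz_iff_ker \<open>u \<noteq> 0\<close> by metis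
          qed
          then have "det PP = 0" using poly_all_0_iff_0 by blast
          then show False using nz unfolding PP_def by simp
        qed
        then have xK0: "xK = 0" using Q(1) det_nz_iff_ker[of Q] u_def by auto
        have "A *v w = 0" using eq0 u0 Du unfolding u_def[symmetric] w_def[symmetric] by simp
        then obtain c where c: "w = Q *v c" "\<forall>j. j \<notin> K \<longrightarrow> c$j = 0"
          using Q(4) N_def by blast
        have "Q *v (xN - c) = 0" using c(1) w_def by (simp add: matrix_vector_mult_diff_distrib)
        then have "xN - c = 0" using Q(1) det_nz_iff_ker[of Q] by blast
        then have xNc: "xN = c" by simp
        have xN0: "xN = 0" unfolding vec_eq_iff
        proof
          fix j show "xN$j = 0$j"
          proof (cases "j \<in> K")
            case True then show ?thesis by (simp add: xN_def)
          next
            case False then show ?thesis using xNc c(2) by simp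
          qed
        qed
        have "x = xK + xN" by (simp add: vec_eq_iff xK_def xN_def)
        then show "x = 0" using xK0 xN0 by simp
      qed
      then show ?thesis using det_nz_iff_ker[of "transpose Rv"] by simp
    qed
    finally show ?thesis .
  qed
  have "order a (det PP) = order a (smult (det Q) (det PP))" using Q(1) by (simp add: order_smult)
  also have "\<dots> = order a ([:-a, 1:] ^ card K * det R)" by (simp add: eq)
  also have "\<dots> = card K + order a (det R)"
    using eq Q(1) nz unfolding PP_def[symmetric] by (subst order_mult) (auto simp: order_power_n_n)
  also have "order a (det R) = 0" using polyR order_root by blast
  finally show ?thesis unfolding PP_def A_def N_def Q(2) by simp
qed


definition ea :: "'n set \<Rightarrow> 'n" where "ea e = fst (ends e)"
definition eb :: "'n set \<Rightarrow> 'n" where "eb e = snd (ends e)"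
definition bvec :: "'n::finite set \<Rightarrow> real^'n" where
  "bvec e = (\<chi> i. (if i = ea e then 1 else 0) - (if i = eb e then 1 else 0))"
definition cvec :: "'n::finite \<Rightarrow> 'n set \<Rightarrow> real^'n" where
  "cvec r e = (\<chi> i. if i = r then 0 else bvec e $ i)"
definition vv :: "'n::finite \<Rightarrow> 'n set option \<Rightarrow> real^'n" where
  "vv r x = (case x of None \<Rightarrow> axis r 1 | Some e \<Rightarrow> cvec r e)"
definition XX :: "'n set set \<Rightarrow> 'n set option set" where "XX E = insert None (Some ` E)"
definition QM :: "'n::finite \<Rightarrow> 'n set set \<Rightarrow> ('n set option \<Rightarrow> real) \<Rightarrow> real^'n^'n" where
  "QM r E \<beta> = (\<chi> i j. \<Sum>x\<in>XX E. \<beta> x * vv r x $ i * vv r x $ j)"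

lemma ends_2set: assumes "a \<noteq> b" shows "ea {a, b} \<noteq> eb {a, b} \<and> {a, b} = {ea {a, b}, eb {a, b}}"
proof -
  have "\<exists>p. {a, b} = {fst p, snd p} \<and> fst p \<noteq> snd p" using assms by (intro exI[of _ "(a, b)"]) auto
  from someI_ex[OF this] show ?thesis unfolding ea_def eb_def ends_def by auto
qed

lemma inner_cvec: "cvec r e \<bullet> y = (if ea e = r then 0 else y $ ea e) - (if eb e = r then 0 else y $ eb e)"
proof -
  have "cvec r e \<bullet> y = (\<Sum>i\<in>UNIV. (if i = ea e then (if ea e = r then 0 else y $ ea e) else 0) - (if i = eb e then (if eb e = r then 0 else y $ eb e) else 0))"
    unfolding inner_vec_def cvec_def bvec_def by (intro sum.cong) auto
  also have "\<dots> = (if ea e = r then 0 else y $ ea e) - (if eb e = r then 0 else y $ eb e)"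
    unfolding sum_subtractf by simp
  finally show ?thesis .
qed

lemma inner_cvec0: "y $ r = 0 \<Longrightarrow> cvec r e \<bullet> y = y $ ea e - y $ eb e"
  unfolding inner_cvec by (cases "ea e = r"; cases "eb e = r") auto

lemma inner_axis1: "axis r 1 \<bullet> (y::real^'n) = y $ r"
  by (simp add: inner_axis')

lemma Z_mult: "((\<chi> i. vv r (f0 i)) *v y) $ i = vv r (f0 i) \<bullet> y"
  by (simp add: matrix_vector_mult_def inner_vec_def)

lemma Zker:
  assumes "range f0 = XX S"
  shows "(\<chi> i. vv r (f0 i)) *v y = 0 \<longleftrightarrow> (y $ r = 0 \<and> (\<forall>e\<in>S. cvec r e \<bullet> y = 0))"
proof -
  have "(\<chi> i. vv r (f0 i)) *v y = 0 \<longleftrightarrow> (\<forall>x\<in>range f0. vv r x \<bullet> y = 0)"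
    unfolding vec_eq_iff Z_mult by auto
  also have "\<dots> \<longleftrightarrow> (y $ r = 0 \<and> (\<forall>e\<in>S. cvec r e \<bullet> y = 0))"
    unfolding assms XX_def by (simp add: vv_def inner_axis1)
  finally show ?thesis .
qed

lemma adj_sym: "(x, y) \<in> adj S \<Longrightarrow> (y, x) \<in> adj S"
  unfolding adj_def by (auto simp: insert_commute)

lemma propagate:
  assumes edg: "\<And>e. e \<in> S \<Longrightarrow> ea e \<noteq> eb e \<and> e = {ea e, eb e}"
    and z: "\<And>e. e \<in> S \<Longrightarrow> z (ea e) = z (eb e)"
    and uv: "(u, v) \<in> (adj S)\<^sup>*"
  shows "z u = z v"
  using uv
proof (induct rule: rtrancl_induct)
  case base then show ?case by simp
next
  case (step x y)
  then have e: "{x, y} \<in> S" unfolding adj_def by auto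
  then have "{x, y} = {ea {x, y}, eb {x, y}}" using edg by blast
  then have "z x = z y" using z[OF e] by (auto simp: doubleton_eq_iff)
  then show ?case using step by simp
qed

lemma propagate_int:
  assumes edg: "\<And>e. e \<in> S \<Longrightarrow> ea e \<noteq> eb e \<and> e = {ea e, eb e}"
    and z: "\<And>e. e \<in> S \<Longrightarrow> z (ea e) - z (eb e) \<in> \<int>"
    and uv: "(u, v) \<in> (adj S)\<^sup>*" and zu: "z u \<in> \<int>"
  shows "z v \<in> \<int>"
  using uv zu
proof (induct rule: rtrancl_induct)
  case base then show ?case by simp
next
  case (step x y)
  then have e: "{x, y} \<in> S" unfolding adj_def by auto
  then have "{x, y} = {ea {x, y}, eb {x, y}}" using edg by blast
  then have "z x - z y \<in> \<int>" using z[OF e] Ints_minus[OF z[OF e]]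
    by (auto simp: doubleton_eq_iff)
  then have "z x - (z x - z y) \<in> \<int>" using step by (intro Ints_diff) auto
  then show ?case by simp
qed

lemma det_Ints:
  fixes A :: "real^'n^'n"
  assumes "\<And>i j. A $ i $ j \<in> \<int>"
  shows "det A \<in> \<int>"
  unfolding det_def using assms by (intro Ints_sum Ints_mult Ints_prod) auto

lemma Ints_unit_sq: assumes "(a::real) \<in> \<int>" "b \<in> \<int>" "a * b = 1" shows "a\<^sup>2 = 1"
proof -
  obtain m n :: int where "a = of_int m" "b = of_int n" using assms Ints_cases by metis
  then have "m * n = 1" using assms(3) by (metis of_int_eq_1_iff of_int_mult)
  then have "m = 1 \<or> m = -1" using zmult_eq_1_iff by blast
  then show ?thesis using \<open>a = of_int m\<close> by auto
qed

lemma connected_from_root: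
  assumes "connected_by S" shows "(r, v) \<in> (adj S)\<^sup>*"
  using assms unfolding connected_by_def by blast

lemma not_connected_from_root:
  assumes "\<not> connected_by S" shows "\<exists>v. (r, v) \<notin> (adj S)\<^sup>*"
proof (rule ccontr)
  assume "\<not> (\<exists>v. (r, v) \<notin> (adj S)\<^sup>*)"
  then have all: "(r, v) \<in> (adj S)\<^sup>*" for v by blast
  have symR: "sym ((adj S)\<^sup>*)" by (rule sym_rtrancl) (auto simp: sym_def adj_sym)
  have "(u, v) \<in> (adj S)\<^sup>*" for u v
    using all[of u] all[of v] symR by (meson rtrancl_trans symD)
  then show False using assms unfolding connected_by_def by blast
qed

lemma G:
  fixes f0 :: "'n::finite \<Rightarrow> 'n set option"
  assumes edg: "\<And>e. e \<in> S \<Longrightarrow> ea e \<noteq> eb e \<and> e = {ea e, eb e}"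
    and rng: "range f0 = XX S"
  shows "(det (\<chi> i. vv r (f0 i)))\<^sup>2 = (if connected_by S then 1 else 0)"
proof (cases "connected_by S")
  case False
  define Z :: "real^'n^'n" where "Z = (\<chi> i. vv r (f0 i))"
  obtain z0 where z0: "(r, z0) \<notin> (adj S)\<^sup>*" using not_connected_from_root[OF False] by blast
  define y :: "real^'n" where "y = (\<chi> i. if (r, i) \<in> (adj S)\<^sup>* then 0 else 1)"
  have yr: "y $ r = 0" unfolding y_def by simp
  have "y \<noteq> 0" using z0 unfolding y_def vec_eq_iff by (auto intro!: exI[of _ z0])
  moreover have "Z *v y = 0" unfolding Z_def Zker[OF rng]
  proof (intro conjI ballI yr)
    fix e assume e: "e \<in> S"
    then have "(ea e, eb e) \<in> adj S" using edg unfolding adj_def by auto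
    then have "(r, ea e) \<in> (adj S)\<^sup>* \<longleftrightarrow> (r, eb e) \<in> (adj S)\<^sup>*"
      using adj_sym by (meson rtrancl.rtrancl_into_rtrancl)
    then have "y $ ea e = y $ eb e" unfolding y_def by simp
    then show "cvec r e \<bullet> y = 0" using inner_cvec0[OF yr] by simp
  qed
  ultimately have "det Z = 0" using det_nz_iff_ker by blast
  then show ?thesis using False unfolding Z_def by simp
next
  case True
  define Z :: "real^'n^'n" where "Z = (\<chi> i. vv r (f0 i))"
  have nz: "det Z \<noteq> 0" unfolding det_nz_iff_ker
  proof (intro allI impI)
    fix y assume "Z *v y = 0"
    then have yr: "y $ r = 0" and ye: "\<forall>e\<in>S. cvec r e \<bullet> y = 0" unfolding Z_def Zker[OF rng] by auto
    have "y $ ea e = y $ eb e" if "e \<in> S" for e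
      using ye that inner_cvec0[OF yr] by simp
    then have "y $ r = y $ v" for v
      using propagate[OF edg, where z="\<lambda>v. y $ v"] connected_from_root[OF True] by blast
    then show "y = 0" using yr unfolding vec_eq_iff by simp
  qed
  obtain W where ZW: "Z ** W = mat 1" using nz invertible_det_nz[of Z] unfolding invertible_def by blast
  have Wint: "W $ v $ k \<in> \<int>" for v k
  proof -
    define y where "y = W *v axis k 1"
    have Zy: "Z *v y = axis k 1" unfolding y_def matrix_vector_mul_assoc ZW by simp
    have yint: "vv r x \<bullet> y \<in> \<int>" if "x \<in> XX S" for x
    proof -
      have "x \<in> range f0" using that rng by simp
      then obtain i where "x = f0 i" by blast
      then have "vv r x \<bullet> y = axis k 1 $ i" using Z_mult[of r f0 y i] Zy unfolding Z_def by simp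
      then show ?thesis by (simp add: axis_def)
    qed
    have yr: "y $ r \<in> \<int>" using yint[of None] by (simp add: XX_def vv_def inner_axis1)
    define z where "z v = (if v = r then 0 else y $ v)" for v
    have "z (ea e) - z (eb e) \<in> \<int>" if "e \<in> S" for e
    proof -
      have "cvec r e \<bullet> y \<in> \<int>" using yint[of "Some e"] that by (simp add: XX_def vv_def)
      moreover have "cvec r e \<bullet> y = z (ea e) - z (eb e)" unfolding inner_cvec z_def by simp
      ultimately show ?thesis by simp
    qed
    then have "z v \<in> \<int>"
      using propagate_int[OF edg, where z=z and u=r and v=v] connected_from_root[OF True] by (simp add: z_def)
    then have "y $ v \<in> \<int>" using yr unfolding z_def by (auto split: if_splits)
    moreover have "y $ v = W $ v $ k" unfolding y_def matrix_vector_mult_basis column_def by simp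
    ultimately show ?thesis by simp
  qed
  have Zint: "Z $ i $ j \<in> \<int>" for i j
    unfolding Z_def vv_def cvec_def bvec_def axis_def by (auto split: option.splits)
  have "det Z * det W = 1" using ZW det_mul[of Z W] by simp
  then have "(det Z)\<^sup>2 = 1" using Ints_unit_sq det_Ints Zint Wint by blast
  then show ?thesis using True unfolding Z_def by simp
qed


lemma card_XX: "finite S \<Longrightarrow> card (XX S) = Suc (card S)"
  unfolding XX_def by (simp add: card_image image_iff)

lemma XXmono: "S \<subseteq> E \<Longrightarrow> range f = XX S \<Longrightarrow> f i \<in> XX E"
  unfolding XX_def by (metis image_mono insert_mono rangeI subsetD)

lemma row_lambda: "row i (\<chi> k. v k) = v i"
  by (simp add: row_def vec_eq_iff)

lemma class_sum:
  fixes f0 :: "'n::finite \<Rightarrow> 'n set option" and h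
  assumes f0: "inj f0"
    and hdef: "\<And>f. h f = (\<Prod>i\<in>UNIV. \<beta> (f i) * vv r (f i) $ i) * det (\<chi> i. vv r (f i))"
  shows "(\<Sum>f\<in>{f :: 'n \<Rightarrow> 'n set option. inj f \<and> range f = range f0}. h f)
         = (\<Prod>x\<in>range f0. \<beta> x) * (det (\<chi> i. vv r (f0 i)))\<^sup>2"
proof -
  define PS where "PS = {\<sigma>. \<sigma> permutes (UNIV :: 'n set)}"
  define Z :: "real^'n^'n" where "Z = (\<chi> i. vv r (f0 i))"
  have img: "{f :: 'n \<Rightarrow> 'n set option. inj f \<and> range f = range f0} = (\<lambda>\<sigma>. f0 \<circ> \<sigma>) ` PS"
  proof (intro set_eqI iffI)
    fix f assume "f \<in> {f :: 'n \<Rightarrow> 'n set option. inj f \<and> range f = range f0}"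
    then have f: "inj f" "range f = range f0" by auto
    define \<sigma> where "\<sigma> = inv f0 \<circ> f"
    have fx: "f0 (inv f0 (f x)) = f x" for x
      using f(2) by (metis f_inv_into_f rangeI)
    have "inj \<sigma>" unfolding \<sigma>_def inj_def o_def
    proof (intro allI impI)
      fix x y assume "inv f0 (f x) = inv f0 (f y)"
      then have "f x = f y" using fx[of x] fx[of y] by metis
      then show "x = y" using f(1) by (simp add: inj_eq)
    qed
    then have "surj \<sigma>" using finite_UNIV_inj_surj[of \<sigma>] by simp
    then have "\<sigma> \<in> PS" unfolding PS_def permutes_altdef using \<open>inj \<sigma>\<close> by (simp add: bij_betw_def)
    moreover have "f = f0 \<circ> \<sigma>" unfolding \<sigma>_def using f
      by (auto simp: fun_eq_iff fx)
    ultimately show "f \<in> (\<lambda>\<sigma>. f0 \<circ> \<sigma>) ` PS" by blast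
  next
    fix f assume "f \<in> (\<lambda>\<sigma>. f0 \<circ> \<sigma>) ` PS"
    then obtain \<sigma> where s: "\<sigma> permutes UNIV" "f = f0 \<circ> \<sigma>" unfolding PS_def by auto
    have "inj f" using s f0 permutes_inj by (metis inj_compose)
    moreover have "range f = range f0"
    proof -
      have "range f = f0 ` range \<sigma>" using s(2) by (simp add: image_comp)
      then show ?thesis using permutes_image[OF s(1)] by simp
    qed
    ultimately show "f \<in> {f :: 'n \<Rightarrow> 'n set option. inj f \<and> range f = range f0}" by simp
  qed
  have injc: "inj_on (\<lambda>\<sigma>. f0 \<circ> \<sigma>) PS"
    using f0 unfolding inj_on_def by (auto simp: fun_eq_iff)
  define Bp where "Bp = (\<Prod>i\<in>UNIV. \<beta> (f0 i))"
  have hs: "h (f0 \<circ> \<sigma>) = Bp * det Z * (of_int (sign \<sigma>) * (\<Prod>i\<in>UNIV. Z $ \<sigma> i $ i))"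
    if s: "\<sigma> \<in> PS" for \<sigma>
  proof -
    have p: "\<sigma> permutes UNIV" using s PS_def by simp
    have "(\<Prod>i\<in>UNIV. \<beta> (f0 (\<sigma> i)) * vv r (f0 (\<sigma> i)) $ i)
          = (\<Prod>i\<in>UNIV. \<beta> (f0 (\<sigma> i))) * (\<Prod>i\<in>UNIV. Z $ \<sigma> i $ i)"
      unfolding prod.distrib Z_def by simp
    also have "(\<Prod>i\<in>UNIV. \<beta> (f0 (\<sigma> i))) = Bp"
      unfolding Bp_def using prod.permute[OF p, of "\<lambda>i. \<beta> (f0 i)"] by (simp add: o_def)
    finally have 1: "(\<Prod>i\<in>UNIV. \<beta> (f0 (\<sigma> i)) * vv r (f0 (\<sigma> i)) $ i) = Bp * (\<Prod>i\<in>UNIV. Z $ \<sigma> i $ i)" .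
    have "det (\<chi> i. vv r (f0 (\<sigma> i))) = det (\<chi> i. Z $ \<sigma> i)" unfolding Z_def by simp
    also have "\<dots> = of_int (sign \<sigma>) * det Z" by (rule det_permute_rows[OF p])
    finally show ?thesis unfolding hdef o_def 1 by (simp add: algebra_simps)
  qed
  have "(\<Sum>f\<in>{f :: 'n \<Rightarrow> 'n set option. inj f \<and> range f = range f0}. h f) = (\<Sum>\<sigma>\<in>PS. h (f0 \<circ> \<sigma>))"
    unfolding img by (simp add: sum.reindex[OF injc])
  also have "\<dots> = Bp * det Z * (\<Sum>\<sigma>\<in>PS. of_int (sign \<sigma>) * (\<Prod>i\<in>UNIV. Z $ \<sigma> i $ i))"
    by (simp add: hs sum_distrib_left)
  also have "(\<Sum>\<sigma>\<in>PS. of_int (sign \<sigma>) * (\<Prod>i\<in>UNIV. Z $ \<sigma> i $ i)) = det (transpose Z)"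
    unfolding det_def PS_def by (simp add: transpose_def)
  also have "Bp = (\<Prod>x\<in>range f0. \<beta> x)" unfolding Bp_def
    by (simp add: prod.reindex[OF f0])
  finally show ?thesis unfolding Z_def by (simp add: power2_eq_square)
qed


lemma det_linear_rows_sum_gen:
  fixes S :: "'s set" and a :: "'n::finite \<Rightarrow> 's \<Rightarrow> 'a::comm_ring_1^'n" and T :: "'n set"
  assumes fS: "finite S"
  shows "det ((\<chi> i. if i \<in> T then sum (a i) S else c i):: 'a^'n^'n) =
    sum (\<lambda>f. det((\<chi> i. if i \<in> T then a i (f i) else c i)::'a^'n^'n))
      {f. (\<forall>i \<in> T. f i \<in> S) \<and> (\<forall>i. i \<notin> T \<longrightarrow> f i = d)}"
proof -
  have fT: "finite T" by simp
  show ?thesis using fT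
  proof (induct T arbitrary: a c set: finite)
    case empty
    have th0: "\<And>x y. (\<chi> i. if i \<in> {} then x i else y i) = (\<chi> i. y i)"
      by vector
    have eqd: "{f. \<forall>i. f i = d} = {\<lambda>i. d}" by auto
    show ?case unfolding th0 by (simp add: eqd)
  next
    case (insert z T a c)
    let ?F = "\<lambda>T. {f. (\<forall>i \<in> T. f i \<in> S) \<and> (\<forall>i. i \<notin> T \<longrightarrow> f i = d)}"
    let ?h = "\<lambda>(y,g) i. if i = z then y else g i"
    let ?k = "\<lambda>h. (h(z),(\<lambda>i. if i = z then d else h i))"
    have thif: "\<And>a b c d. (if a \<or> b then c else d) = (if a then c else if b then c else d)"
      by simp
    have thif2: "\<And>a b c d e. (if a then b else if c then d else e) =
       (if c then (if a then b else d) else (if a then b else e))"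
      by simp
    from \<open>z \<notin> T\<close> have nz: "\<And>i. i \<in> T \<Longrightarrow> i \<noteq> z"
      by auto
    have "det (\<chi> i. if i \<in> insert z T then sum (a i) S else c i) =
      det (\<chi> i. if i = z then sum (a i) S else if i \<in> T then sum (a i) S else c i)"
      unfolding insert_iff thif ..
    also have "\<dots> = (\<Sum>j\<in>S. det (\<chi> i. if i \<in> T then sum (a i) S else if i = z then a i j else c i))"
      unfolding det_linear_row_sum[OF fS]
      by (subst thif2) (simp add: nz cong: if_cong)
    finally have tha:
      "det (\<chi> i. if i \<in> insert z T then sum (a i) S else c i) =
       (\<Sum>(j, f)\<in>S \<times> ?F T. det (\<chi> i. if i \<in> T then a i (f i)
                                  else if i = z then a i j
                                  else c i))"
      unfolding insert.hyps unfolding sum.cartesian_product by blast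
    show ?case unfolding tha
      using \<open>z \<notin> T\<close>
      by (intro sum.reindex_bij_witness[where i="?k" and j="?h"])
         (auto intro!: cong[OF refl[of det]] simp: vec_eq_iff)
  qed
qed

lemma det_linear_rows_sum_UNIV:
  fixes S :: "'s set" and a :: "'n::finite \<Rightarrow> 's \<Rightarrow> 'a::comm_ring_1^'n"
  assumes fS: "finite S"
  shows "det ((\<chi> i. sum (a i) S):: 'a^'n^'n) =
    sum (\<lambda>f. det((\<chi> i. a i (f i))::'a^'n^'n)) {f. \<forall>i. f i \<in> S}"
  using det_linear_rows_sum_gen[OF fS, of UNIV a] by simp

lemma CB:
  fixes r :: "'n::finite" and E :: "'n set set"
  assumes edg: "\<And>e. e \<in> E \<Longrightarrow> ea e \<noteq> eb e \<and> e = {ea e, eb e}"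
    and b1: "\<beta> None = 1"
  shows "det (QM r E \<beta>) = (\<Sum>S\<in>{S. S \<subseteq> E \<and> card S = CARD('n) - 1 \<and> connected_by S}. \<Prod>e\<in>S. \<beta> (Some e))"
proof -
  let ?X = "XX E"
  have finX: "finite ?X" by simp
  define h where "h f = (\<Prod>i\<in>UNIV. \<beta> (f i) * vv r (f i) $ i) * det (\<chi> i. vv r (f i))"
    for f :: "'n \<Rightarrow> 'n set option"
  define F where "F = {f :: 'n \<Rightarrow> 'n set option. \<forall>i. f i \<in> ?X}"
  have step1: "QM r E \<beta> = (\<chi> i. \<Sum>x\<in>?X. (\<beta> x * vv r x $ i) *s vv r x)"
    by (simp add: QM_def vec_eq_iff sum_component mult.assoc)
  have "det (QM r E \<beta>) = (\<Sum>f\<in>F. h f)"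
    unfolding step1 det_linear_rows_sum_UNIV[OF finX, of "\<lambda>i x. (\<beta> x * vv r x $ i) *s vv r x"]
      h_def F_def by (simp add: det_rows_mul)
  define FI where "FI = {f\<in>F. inj f \<and> None \<in> range f}"
  have "(\<Sum>f\<in>F. h f) = (\<Sum>f\<in>FI. h f)"
  proof (rule sum.mono_neutral_right)
    show "finite F" by simp
    show "FI \<subseteq> F" unfolding FI_def by auto
    show "\<forall>f\<in>F - FI. h f = 0"
    proof
      fix f assume f: "f \<in> F - FI"
      show "h f = 0"
      proof (cases "inj f")
        case False
        then obtain i j where ij: "i \<noteq> j" "f i = f j" unfolding inj_def by blast
        have "det (\<chi> i. vv r (f i)) = 0"
          by (rule det_identical_rows[OF ij(1)]) (simp add: row_lambda ij(2))
        then show ?thesis unfolding h_def by simp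
      next
        case True
        then have "None \<notin> range f" using f unfolding FI_def by auto
        then obtain e where "f r = Some e" by (metis not_None_eq rangeI)
        then have "\<beta> (f r) * vv r (f r) $ r = 0" by (simp add: vv_def cvec_def)
        then have "(\<Prod>i\<in>UNIV. \<beta> (f i) * vv r (f i) $ i) = 0" by (intro prod_zero) auto
        then show ?thesis unfolding h_def by simp
      qed
    qed
  qed
  define \<kappa> where "\<kappa> f = {e. Some e \<in> range f}" for f :: "'n \<Rightarrow> 'n set option"
  have rngFI: "range f = XX (\<kappa> f)" if "f \<in> FI" for f
  proof -
    have "range f \<subseteq> ?X" "None \<in> range f" using that unfolding FI_def F_def by auto
    then show ?thesis unfolding XX_def \<kappa>_def by (auto simp: image_iff) (metis option.exhaust)
  qed
  have kE: "\<kappa> f \<subseteq> E" if fFI: "f \<in> FI" for f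
  proof
    fix e assume "e \<in> \<kappa> f"
    then obtain i where fi: "f i = Some e" by (auto simp: \<kappa>_def)
    moreover have "f i \<in> ?X" using fFI unfolding FI_def F_def by auto
    ultimately show "e \<in> E" by (auto simp: XX_def)
  qed
  have finE: "finite E" by simp
  have cardk: "card (\<kappa> f) = CARD('n) - 1" if "f \<in> FI" for f
  proof -
    have "card (range f) = CARD('n)" using that unfolding FI_def by (simp add: card_image)
    moreover have "finite (\<kappa> f)" by simp
    ultimately show ?thesis using rngFI[OF that] card_XX[of "\<kappa> f"] by simp
  qed
  have kimg: "\<kappa> ` FI = {S. S \<subseteq> E \<and> card S = CARD('n) - 1}"
  proof (intro set_eqI iffI)
    fix S assume "S \<in> \<kappa> ` FI" then show "S \<in> {S. S \<subseteq> E \<and> card S = CARD('n) - 1}"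
      using kE cardk by auto
  next
    fix S assume "S \<in> {S. S \<subseteq> E \<and> card S = CARD('n) - 1}"
    then have S: "S \<subseteq> E" "card S = CARD('n) - 1" by auto
    have finS: "finite S" by simp
    have "card (UNIV :: 'n set) = card (XX S)" using S(2) card_XX[OF finS]
      by (simp add: Suc_diff_1 finite_UNIV_card_ge_0)
    then obtain f :: "'n \<Rightarrow> 'n set option" where f: "bij_betw f UNIV (XX S)"
      using finite_same_card_bij[of "UNIV :: 'n set" "XX S"] by auto
    have rf: "range f = XX S" "inj f" using f by (auto simp: bij_betw_def)
    have "\<forall>i. f i \<in> XX E" using XXmono[OF S(1) rf(1)] by blast
    moreover have "None \<in> range f" using rf(1) by (simp add: XX_def)
    ultimately have "f \<in> FI" using rf(2) unfolding FI_def F_def by blast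
    moreover have "\<kappa> f = S" using f unfolding \<kappa>_def bij_betw_def XX_def by auto
    ultimately show "S \<in> \<kappa> ` FI" by blast
  qed
  have cls: "(\<Sum>f\<in>{f\<in>FI. \<kappa> f = S}. h f) = (if connected_by S then \<Prod>e\<in>S. \<beta> (Some e) else 0)"
    if S: "S \<in> \<kappa> ` FI" for S
  proof -
    obtain f0 where f0: "f0 \<in> FI" "\<kappa> f0 = S" using S by blast
    have rng0: "range f0 = XX S" using rngFI[OF f0(1)] f0(2) by simp
    have SE: "S \<subseteq> E" using kE f0 by blast
    have finS: "finite S" by simp
    have "{f\<in>FI. \<kappa> f = S} = {f :: 'n \<Rightarrow> 'n set option. inj f \<and> range f = range f0}"
    proof (intro set_eqI iffI)
      fix f assume "f \<in> {f\<in>FI. \<kappa> f = S}"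
      then have "f \<in> FI" "\<kappa> f = S" by auto
      then have "inj f" "range f = range f0" using rngFI[of f] rng0 unfolding FI_def by auto
      then show "f \<in> {f. inj f \<and> range f = range f0}" by simp
    next
      fix f assume "f \<in> {f :: 'n \<Rightarrow> 'n set option. inj f \<and> range f = range f0}"
      then have f: "inj f" "range f = XX S" using rng0 by auto
      have "\<forall>i. f i \<in> XX E" using XXmono[OF SE f(2)] by blast
      moreover have "None \<in> range f" using f(2) by (simp add: XX_def)
      ultimately have "f \<in> FI" using f(1) unfolding FI_def F_def by blast
      moreover have "\<kappa> f = S" using f(2) unfolding \<kappa>_def XX_def by auto
      ultimately show "f \<in> {f\<in>FI. \<kappa> f = S}" by simp
    qed
    then have "(\<Sum>f\<in>{f\<in>FI. \<kappa> f = S}. h f) = (\<Prod>x\<in>range f0. \<beta> x) * (det (\<chi> i. vv r (f0 i)))\<^sup>2"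
      using class_sum[of f0 h \<beta> r] f0(1) h_def unfolding FI_def by simp
    also have "(\<Prod>x\<in>range f0. \<beta> x) = (\<Prod>e\<in>S. \<beta> (Some e))"
      unfolding rng0 XX_def using finS b1 by (simp add: prod.reindex image_iff)
    also have "(det (\<chi> i. vv r (f0 i)))\<^sup>2 = (if connected_by S then 1 else 0)"
      by (rule G[OF _ rng0]) (use edg SE in blast)
    finally show ?thesis by simp
  qed
  have finFI: "finite FI" by simp
  have "(\<Sum>f\<in>FI. h f) = (\<Sum>S\<in>\<kappa> ` FI. \<Sum>f\<in>{f\<in>FI. \<kappa> f = S}. h f)"
    by (rule sum.image_gen[OF finFI])
  also have "\<dots> = (\<Sum>S\<in>\<kappa> ` FI. if connected_by S then \<Prod>e\<in>S. \<beta> (Some e) else 0)"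
    by (rule sum.cong[OF refl]) (rule cls)
  also have "\<dots> = (\<Sum>S\<in>{S\<in>\<kappa> ` FI. connected_by S}. \<Prod>e\<in>S. \<beta> (Some e))"
    by (rule sum.inter_filter[symmetric]) simp
  also have "{S\<in>\<kappa> ` FI. connected_by S} = {S. S \<subseteq> E \<and> card S = CARD('n) - 1 \<and> connected_by S}"
    unfolding kimg by auto
  finally show ?thesis using \<open>det (QM r E \<beta>) = (\<Sum>f\<in>F. h f)\<close> \<open>(\<Sum>f\<in>F. h f) = (\<Sum>f\<in>FI. h f)\<close>
    by simp
qed






section \<open>Laplacian decomposition\<close>

lemma edges_prop: assumes "e \<in> edges g" shows "ea e \<noteq> eb e \<and> e = {ea e, eb e}"
proof -
  obtain i j where "e = {i, j}" "i \<noteq> j" using assms unfolding edges_def by auto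
  then show ?thesis using ends_2set by simp
qed

lemma edge_mem: "i \<noteq> j \<Longrightarrow> g i j \<noteq> 0 \<Longrightarrow> {i, j} \<in> edges g"
  unfolding edges_def by auto

lemma pair_cases: "{a, b} = {c, d} \<Longrightarrow> (a = c \<and> b = d) \<or> (a = d \<and> b = c)"
  by (auto simp: doubleton_eq_iff)

lemma pairs_sum:
  fixes \<psi> :: "'n::finite \<Rightarrow> 'n \<Rightarrow> real" and g :: "'n \<Rightarrow> 'n \<Rightarrow> real"
  assumes sym: "\<And>a b. \<psi> a b = \<psi> b a"
    and supp: "\<And>a b. \<psi> a b \<noteq> 0 \<Longrightarrow> a \<noteq> b \<and> g a b \<noteq> 0"
  shows "(\<Sum>p\<in>UNIV. \<psi> (fst p) (snd p)) = 2 * (\<Sum>e\<in>edges g. \<psi> (ea e) (eb e))"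
proof -
  let ?E = "edges g"
  define P1 where "P1 = (\<lambda>e. (ea e, eb e)) ` ?E"
  define P2 where "P2 = (\<lambda>e. (eb e, ea e)) ` ?E"
  have inj1: "inj_on (\<lambda>e. (ea e, eb e)) ?E"
    unfolding inj_on_def using edges_prop by (metis prod.inject)
  have inj2: "inj_on (\<lambda>e. (eb e, ea e)) ?E"
    unfolding inj_on_def using edges_prop by (metis prod.inject insert_commute)
  have disj: "P1 \<inter> P2 = {}"
  proof (rule ccontr)
    assume "P1 \<inter> P2 \<noteq> {}"
    then obtain e e' where e: "e \<in> ?E" "e' \<in> ?E" "ea e = eb e'" "eb e = ea e'"
      unfolding P1_def P2_def by auto
    then have "e = e'" using edges_prop[OF e(1)] edges_prop[OF e(2)] by (metis insert_commute)
    then show False using e(3) edges_prop[OF e(1)] by simp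
  qed
  have "(\<Sum>p\<in>UNIV. \<psi> (fst p) (snd p)) = (\<Sum>p\<in>P1 \<union> P2. \<psi> (fst p) (snd p))"
  proof (rule sum.mono_neutral_right)
    show "\<forall>p\<in>UNIV - (P1 \<union> P2). \<psi> (fst p) (snd p) = 0"
    proof (rule ballI, rule ccontr)
      fix p assume p: "p \<in> UNIV - (P1 \<union> P2)" and nz: "\<psi> (fst p) (snd p) \<noteq> 0"
      obtain a b where ab: "p = (a, b)" by fastforce
      then have "a \<noteq> b" "g a b \<noteq> 0" using supp nz by auto
      then have e: "{a, b} \<in> ?E" by (rule edge_mem)
      then have "(a = ea {a,b} \<and> b = eb {a,b}) \<or> (a = eb {a,b} \<and> b = ea {a,b})"
        using edges_prop[OF e] pair_cases by metis
      then have "p \<in> P1 \<union> P2" unfolding P1_def P2_def ab using e by (auto simp: image_iff)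
      then show False using p by simp
    qed
  qed auto
  also have "\<dots> = (\<Sum>p\<in>P1. \<psi> (fst p) (snd p)) + (\<Sum>p\<in>P2. \<psi> (fst p) (snd p))"
    by (rule sum.union_disjoint) (auto simp: disj)
  also have "(\<Sum>p\<in>P1. \<psi> (fst p) (snd p)) = (\<Sum>e\<in>?E. \<psi> (ea e) (eb e))"
    unfolding P1_def by (simp add: sum.reindex[OF inj1])
  also have "(\<Sum>p\<in>P2. \<psi> (fst p) (snd p)) = (\<Sum>e\<in>?E. \<psi> (ea e) (eb e))"
    unfolding P2_def sum.reindex[OF inj2] by (intro sum.cong refl) (simp add: sym[of "eb _"])
  finally show ?thesis by simp
qed

lemma laplacian_decomp:
  fixes w g :: "'n::finite \<Rightarrow> 'n \<Rightarrow> real"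
  assumes wsym: "\<And>a b. w a b = w b a" and wdiag: "\<And>a. w a a = 0"
    and wsupp: "\<And>a b. w a b \<noteq> 0 \<Longrightarrow> g a b \<noteq> 0"
  shows "laplacian w $ i $ j = (\<Sum>e\<in>edges g. - w (ea e) (eb e) * bvec e $ i * bvec e $ j)"
proof -
  define \<delta> where "\<delta> a b k = (if k = a then 1 else 0) - (if k = b then (1::real) else 0)" for a b k :: 'n
  define \<psi> where "\<psi> a b = w a b * \<delta> a b i * \<delta> a b j" for a b
  have bv: "bvec e $ k = \<delta> (ea e) (eb e) k" for e k unfolding bvec_def \<delta>_def by simp
  have "(\<Sum>p\<in>UNIV. \<psi> (fst p) (snd p)) = 2 * (\<Sum>e\<in>edges g. \<psi> (ea e) (eb e))"
  proof (rule pairs_sum)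
    show "\<psi> a b = \<psi> b a" for a b unfolding \<psi>_def \<delta>_def using wsym[of a b] by auto
    show "\<psi> a b \<noteq> 0 \<Longrightarrow> a \<noteq> b \<and> g a b \<noteq> 0" for a b
      unfolding \<psi>_def using wdiag wsupp by auto
  qed
  moreover have "(\<Sum>p\<in>UNIV. \<psi> (fst p) (snd p)) = 2 * ((if i = j then (\<Sum>b\<in>UNIV. w i b) else 0) - w i j)"
  proof -
    have s1: "(\<Sum>a\<in>UNIV. \<Sum>b\<in>UNIV. (if a = i \<and> a = j then w a b else 0)) = (if i = j then (\<Sum>b\<in>UNIV. w i b) else 0)"
    proof -
      have "(\<Sum>b\<in>UNIV. (if a = i \<and> a = j then w a b else 0)) = (if a = i then (if i = j then (\<Sum>b\<in>UNIV. w i b) else 0) else 0)" for a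
        by (cases "a = i"; cases "a = j") simp_all
      then show ?thesis by simp
    qed
    have s2: "(\<Sum>a\<in>UNIV. \<Sum>b\<in>UNIV. (if a = i \<and> b = j then w a b else 0)) = w i j"
    proof -
      have "(\<Sum>b\<in>UNIV. (if a = i \<and> b = j then w a b else 0)) = (if a = i then w i j else 0)" for a
        by (cases "a = i") simp_all
      then show ?thesis by simp
    qed
    have s3: "(\<Sum>a\<in>UNIV. \<Sum>b\<in>UNIV. (if b = i \<and> a = j then w a b else 0)) = w j i"
    proof -
      have "(\<Sum>b\<in>UNIV. (if b = i \<and> a = j then w a b else 0)) = (if a = j then w j i else 0)" for a
        by (cases "a = j") simp_all
      then show ?thesis by simp
    qed
    have s4: "(\<Sum>a\<in>UNIV. \<Sum>b\<in>UNIV. (if b = i \<and> b = j then w a b else 0)) = (if i = j then (\<Sum>a\<in>UNIV. w a i) else 0)"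
    proof -
      have "(\<Sum>b\<in>UNIV. (if b = i \<and> b = j then w a b else 0)) = (if i = j then w a i else 0)" for a
        by (cases "i = j") (auto intro!: sum.neutral)
      then show ?thesis by simp
    qed
    have "(\<Sum>p\<in>UNIV. \<psi> (fst p) (snd p)) = (\<Sum>a\<in>UNIV. \<Sum>b\<in>UNIV. \<psi> a b)"
      by (simp add: UNIV_Times_UNIV[symmetric] sum.cartesian_product case_prod_beta del: UNIV_Times_UNIV)
    also have "\<dots> = (\<Sum>a\<in>UNIV. \<Sum>b\<in>UNIV.
        (if a = i \<and> a = j then w a b else 0) - (if a = i \<and> b = j then w a b else 0)
        - (if b = i \<and> a = j then w a b else 0) + (if b = i \<and> b = j then w a b else 0))"
    proof (intro sum.cong refl)
      fix a b
      show "\<psi> a b = (if a = i \<and> a = j then w a b else 0) - (if a = i \<and> b = j then w a b else 0)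
        - (if b = i \<and> a = j then w a b else 0) + (if b = i \<and> b = j then w a b else 0)"
        unfolding \<psi>_def \<delta>_def by (cases "a = i"; cases "a = j"; cases "b = i"; cases "b = j") simp_all
    qed
    also have "\<dots> = (\<Sum>a\<in>UNIV. \<Sum>b\<in>UNIV. (if a = i \<and> a = j then w a b else 0))
       - (\<Sum>a\<in>UNIV. \<Sum>b\<in>UNIV. (if a = i \<and> b = j then w a b else 0))
       - (\<Sum>a\<in>UNIV. \<Sum>b\<in>UNIV. (if b = i \<and> a = j then w a b else 0))
       + (\<Sum>a\<in>UNIV. \<Sum>b\<in>UNIV. (if b = i \<and> b = j then w a b else 0))"
      by (simp only: sum.distrib sum_subtractf)
    also have "\<dots> = 2 * ((if i = j then (\<Sum>b\<in>UNIV. w i b) else 0) - w i j)"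
    proof -
      have "(\<Sum>a\<in>UNIV. w a i) = (\<Sum>b\<in>UNIV. w i b)" by (intro sum.cong refl) (rule wsym)
      then show ?thesis unfolding s1 s2 s3 s4 using wsym[of j i] by auto
    qed
    finally show ?thesis .
  qed
  ultimately have key: "(\<Sum>e\<in>edges g. \<psi> (ea e) (eb e)) = (if i = j then (\<Sum>b\<in>UNIV. w i b) else 0) - w i j"
    by simp
  have "laplacian w $ i $ j = - ((if i = j then (\<Sum>b\<in>UNIV. w i b) else 0) - w i j)"
  proof -
    have "(\<Sum>k\<in>UNIV - {i}. w i k) = (\<Sum>b\<in>UNIV. w i b)"
      by (simp add: sum_diff1 wdiag)
    then show ?thesis unfolding laplacian_def using wdiag by auto
  qed
  also have "\<dots> = (\<Sum>e\<in>edges g. - w (ea e) (eb e) * bvec e $ i * bvec e $ j)"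
  proof -
    have "(\<Sum>e\<in>edges g. - w (ea e) (eb e) * bvec e $ i * bvec e $ j) = - (\<Sum>e\<in>edges g. \<psi> (ea e) (eb e))"
      unfolding \<psi>_def bv sum_negf[symmetric] by simp
    then show ?thesis using key by simp
  qed
  finally show ?thesis .
qed


lemma sum_XX: "finite E \<Longrightarrow> (\<Sum>x\<in>XX E. f x) = f None + (\<Sum>e\<in>E. f (Some e))"
  unfolding XX_def by (simp add: sum.reindex image_iff)

lemma QM_entry:
  fixes w g :: "'n::finite \<Rightarrow> 'n \<Rightarrow> real"
  assumes wsym: "\<And>a b. w a b = w b a" and wdiag: "\<And>a. w a a = 0"
    and wsupp: "\<And>a b. w a b \<noteq> 0 \<Longrightarrow> g a b \<noteq> 0"
    and b0: "\<beta> None = 1" and be: "\<And>e. e \<in> edges g \<Longrightarrow> \<beta> (Some e) = - w (ea e) (eb e)"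
  shows "QM r (edges g) \<beta> $ i $ j = (if i = r \<or> j = r then (if i = j then 1 else 0) else laplacian w $ i $ j)"
proof -
  have "QM r (edges g) \<beta> $ i $ j = \<beta> None * axis r 1 $ i * axis r 1 $ j
      + (\<Sum>e\<in>edges g. \<beta> (Some e) * cvec r e $ i * cvec r e $ j)"
    unfolding QM_def by (simp add: sum_XX vv_def)
  also have "\<dots> = (if i = r \<or> j = r then (if i = j then 1 else 0) else laplacian w $ i $ j)"
  proof (cases "i = r \<or> j = r")
    case True
    then show ?thesis using b0 by (auto simp: cvec_def axis_def)
  next
    case False
    then have "(\<Sum>e\<in>edges g. \<beta> (Some e) * cvec r e $ i * cvec r e $ j)
        = (\<Sum>e\<in>edges g. - w (ea e) (eb e) * bvec e $ i * bvec e $ j)"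
      by (intro sum.cong refl) (simp add: cvec_def be)
    moreover have "laplacian w $ i $ j = (\<Sum>e\<in>edges g. - w (ea e) (eb e) * bvec e $ i * bvec e $ j)"
      by (rule laplacian_decomp) (use wsym wdiag wsupp in auto)
    ultimately show ?thesis using False by (simp add: axis_def)
  qed
  finally show ?thesis .
qed

lemma lap_sym: "(\<And>a b. w a b = w b a) \<Longrightarrow> laplacian w $ i $ j = laplacian w $ j $ i"
  unfolding laplacian_def by simp

lemma lap_rowsum: "(\<Sum>j\<in>UNIV. laplacian w $ i $ j) = 0"
proof -
  have "(\<Sum>j\<in>UNIV. laplacian w $ i $ j) = laplacian w $ i $ i + (\<Sum>j\<in>UNIV - {i}. laplacian w $ i $ j)"
    by (simp add: sum.remove)
  also have "(\<Sum>j\<in>UNIV - {i}. laplacian w $ i $ j) = (\<Sum>j\<in>UNIV - {i}. w i j)"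
    unfolding laplacian_def by (intro sum.cong) auto
  finally show ?thesis unfolding laplacian_def by simp
qed

lemma lap_colsum:
  assumes "\<And>a b. w a b = w b a"
  shows "(\<Sum>i\<in>UNIV. (laplacian w *v v) $ i) = 0"
proof -
  have "(\<Sum>i\<in>UNIV. (laplacian w *v v) $ i) = (\<Sum>i\<in>UNIV. \<Sum>j\<in>UNIV. laplacian w $ i $ j * v $ j)"
    unfolding matrix_vector_mult_def by simp
  also have "\<dots> = (\<Sum>j\<in>UNIV. \<Sum>i\<in>UNIV. laplacian w $ i $ j * v $ j)"
    by (rule sum.swap)
  also have "\<dots> = (\<Sum>j\<in>UNIV. (\<Sum>i\<in>UNIV. laplacian w $ j $ i) * v $ j)"
    unfolding sum_distrib_right using lap_sym[of w, OF assms] by simp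
  also have "\<dots> = 0" by (simp add: lap_rowsum)
  finally show ?thesis .
qed

lemma lap_one: "laplacian w *v (\<chi> i. 1) = 0"
  unfolding vec_eq_iff matrix_vector_mult_def by (simp add: lap_rowsum)

lemma sum_but_r: "(\<Sum>j\<in>UNIV. (if j = r then 0 else (F::'n::finite \<Rightarrow> real) j)) = (\<Sum>j\<in>UNIV. F j) - F (r::'n::finite)"
proof -
  have "(\<Sum>j\<in>UNIV. (if j = r then 0 else F j)) = (\<Sum>j\<in>UNIV. F j - (if j = r then F r else 0))"
    by (intro sum.cong) auto
  then show ?thesis by (simp add: sum_subtractf)
qed

lemma null_QM:
  fixes w g :: "'n::finite \<Rightarrow> 'n \<Rightarrow> real"
  assumes wsym: "\<And>a b. w a b = w b a" and wdiag: "\<And>a. w a a = 0"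
    and wsupp: "\<And>a b. w a b \<noteq> 0 \<Longrightarrow> g a b \<noteq> 0"
    and b0: "\<beta> None = 1" and be: "\<And>e. e \<in> edges g \<Longrightarrow> \<beta> (Some e) = - w (ea e) (eb e)"
  shows "{v. QM r (edges g) \<beta> *v v = 0} = {v. laplacian w *v v = 0 \<and> v $ r = 0}"
proof -
  let ?L = "laplacian w"
  have entry: "QM r (edges g) \<beta> $ i $ j = (if i = r \<or> j = r then (if i = j then 1 else 0) else laplacian w $ i $ j)" for i j
    by (rule QM_entry) (use assms in auto)
  have comp: "(QM r (edges g) \<beta> *v v) $ i = (if i = r then v $ r else (?L *v v) $ i - ?L $ i $ r * v $ r)" for v i
  proof (cases "i = r")
    case True
    then show ?thesis unfolding matrix_vector_mult_def entry
      by (simp add: if_distrib[of "\<lambda>x. x * _"] cong: if_cong)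
  next
    case False
    have "(QM r (edges g) \<beta> *v v) $ i = (\<Sum>j\<in>UNIV. if j = r then 0 else ?L $ i $ j * v $ j)"
      unfolding matrix_vector_mult_def entry vec_lambda_beta using False
      by (intro sum.cong) auto
    then show ?thesis using False unfolding sum_but_r by (simp add: matrix_vector_mult_def)
  qed
  show ?thesis
  proof (intro set_eqI iffI)
    fix v assume "v \<in> {v. QM r (edges g) \<beta> *v v = 0}"
    then have Q0: "(QM r (edges g) \<beta> *v v) $ i = 0" for i by simp
    have vr: "v $ r = 0" using Q0[of r] comp[of v r] by simp
    have oth: "(?L *v v) $ i = 0" if "i \<noteq> r" for i using Q0[of i] comp[of v i] that vr by simp
    have "(\<Sum>i\<in>UNIV. (?L *v v) $ i) = (?L *v v) $ r + (\<Sum>i\<in>UNIV - {r}. (?L *v v) $ i)"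
      by (simp add: sum.remove)
    also have "(\<Sum>i\<in>UNIV - {r}. (?L *v v) $ i) = 0" using oth by (intro sum.neutral) auto
    finally have "(?L *v v) $ r = 0" using lap_colsum[of w v, OF wsym] by simp
    then have "?L *v v = 0" using oth unfolding vec_eq_iff by (metis zero_index)
    then show "v \<in> {v. ?L *v v = 0 \<and> v $ r = 0}" using vr by simp
  next
    fix v assume "v \<in> {v. ?L *v v = 0 \<and> v $ r = 0}"
    then show "v \<in> {v. QM r (edges g) \<beta> *v v = 0}" unfolding vec_eq_iff using comp[of v] by simp
  qed
qed


lemma dim_eq:
  fixes L :: "real^'n::finite^'n"
  assumes one: "L *v (\<chi> i. 1) = 0"
  shows "dim {v. L *v v = 0 \<and> (\<Sum>i\<in>UNIV. v $ i) = 0} = dim {v. L *v v = 0 \<and> v $ r = 0}"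
proof -
  define o1 :: "real^'n" where "o1 = (\<chi> i. 1)"
  define A where "A = {v. L *v v = 0 \<and> (\<Sum>i\<in>UNIV. v $ i) = 0}"
  define B where "B = {v. L *v v = 0 \<and> v $ r = 0}"
  define \<phi> where "\<phi> v = v - (v $ r) *\<^sub>R o1" for v :: "real^'n"
  have Lo: "L *v o1 = 0" using one o1_def by simp
  have so: "(\<Sum>i\<in>UNIV. o1 $ i) = real CARD('n)" unfolding o1_def by simp
  have lin: "linear \<phi>" unfolding linear_iff \<phi>_def by (simp add: algebra_simps)
  have sA: "subspace A" unfolding subspace_def A_def
    by (simp add: matrix_vector_right_distrib smv sum.distrib sum_distrib_left[symmetric]
        matrix_vector_mult_scaleR)
  have Lphi: "L *v \<phi> v = L *v v" for v
    unfolding \<phi>_def by (simp add: matrix_vector_mult_diff_distrib matrix_vector_mult_scaleR Lo)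
  have inj: "inj_on \<phi> (span A)"
    unfolding span_eq_iff[THEN iffD2, OF sA] inj_on_def
  proof (intro ballI impI)
    fix x y assume x: "x \<in> A" and y: "y \<in> A" and eq: "\<phi> x = \<phi> y"
    then have xy: "x - y = (x $ r - y $ r) *\<^sub>R o1" unfolding \<phi>_def by (simp add: algebra_simps)
    have "(\<Sum>i\<in>UNIV. (x - y) $ i) = 0" using x y unfolding A_def by (simp add: sum_subtractf)
    then have "(x $ r - y $ r) * real CARD('n) = 0" unfolding xy using so by (simp add: sum_distrib_left[symmetric])
    then have "x $ r = y $ r" by simp
    then show "x = y" using xy by simp
  qed
  have img: "\<phi> ` A = B"
  proof (intro set_eqI iffI)
    fix y assume "y \<in> \<phi> ` A"
    then obtain x where "x \<in> A" "y = \<phi> x" by blast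
    then show "y \<in> B" unfolding A_def B_def using Lphi by (simp add: \<phi>_def o1_def)
  next
    fix y assume y: "y \<in> B"
    define c where "c = (\<Sum>i\<in>UNIV. y $ i) / real CARD('n)"
    define x where "x = y - c *\<^sub>R o1"
    have "L *v x = 0" using y unfolding x_def B_def
      by (simp add: matrix_vector_mult_diff_distrib matrix_vector_mult_scaleR Lo)
    moreover have "(\<Sum>i\<in>UNIV. x $ i) = 0"
      unfolding x_def c_def using so by (simp add: sum_subtractf sum_distrib_left[symmetric] o1_def)
    ultimately have "x \<in> A" unfolding A_def by simp
    moreover have "\<phi> x = y" using y unfolding \<phi>_def x_def B_def by (simp add: o1_def vec_eq_iff)
    ultimately show "y \<in> \<phi> ` A" by blast
  qed
  show ?thesis using dim_image_eq[OF lin inj] img unfolding A_def B_def by simp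
qed


lemma QM_mult: "QM r E \<beta> *v y = (\<Sum>x\<in>XX E. (\<beta> x * (vv r x \<bullet> y)) *\<^sub>R vv r x)"
proof -
  have "(QM r E \<beta> *v y) $ i = (\<Sum>x\<in>XX E. (\<beta> x * (vv r x \<bullet> y)) * vv r x $ i)" for i
  proof -
    have "(QM r E \<beta> *v y) $ i = (\<Sum>j\<in>UNIV. \<Sum>x\<in>XX E. \<beta> x * vv r x $ i * vv r x $ j * y $ j)"
      unfolding matrix_vector_mult_def QM_def by (simp add: sum_distrib_right)
    also have "\<dots> = (\<Sum>x\<in>XX E. \<Sum>j\<in>UNIV. \<beta> x * vv r x $ i * vv r x $ j * y $ j)"
      by (rule sum.swap)
    also have "\<dots> = (\<Sum>x\<in>XX E. (\<beta> x * (vv r x \<bullet> y)) * vv r x $ i)"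
      unfolding inner_vec_def by (intro sum.cong refl) (simp add: sum_distrib_left sum_distrib_right algebra_simps)
    finally show ?thesis .
  qed
  then show ?thesis unfolding vec_eq_iff by (simp add: sum_component)
qed

lemma QM_quad: "y \<bullet> (QM r E \<beta> *v y) = (\<Sum>x\<in>XX E. \<beta> x * (vv r x \<bullet> y)\<^sup>2)"
  unfolding QM_mult by (simp add: inner_sum_right inner_commute power2_eq_square mult.assoc)

lemma QM_sym: "transpose (QM r E \<beta>) = QM r E \<beta>"
  unfolding QM_def transpose_def by (simp add: vec_eq_iff mult.commute mult.left_commute)

lemma QM_psd_ker:
  assumes nn: "\<And>x. x \<in> XX E \<Longrightarrow> \<beta> x \<ge> 0" and fin: "finite E"
    and q: "y \<bullet> (QM r E \<beta> *v y) = 0"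
  shows "QM r E \<beta> *v y = 0"
proof -
  have finX: "finite (XX E)" using fin by (simp add: XX_def)
  have "\<forall>x\<in>XX E. \<beta> x * (vv r x \<bullet> y)\<^sup>2 = 0"
    using q unfolding QM_quad by (subst (asm) sum_nonneg_eq_0_iff[OF finX]) (auto simp: nn)
  then have "\<forall>x\<in>XX E. \<beta> x * (vv r x \<bullet> y) = 0"
    by (metis mult_eq_0_iff power2_eq_square)
  then show ?thesis unfolding QM_mult by (intro sum.neutral) simp
qed

lemma QM_affine: "QM r E (\<lambda>x. \<beta>0 x + t * \<beta>1 x) = QM r E \<beta>0 + t *\<^sub>R QM r E \<beta>1"
  unfolding QM_def by (simp add: vec_eq_iff sum.distrib sum_distrib_left algebra_simps)


lemma prod_neg: "finite S \<Longrightarrow> (\<Prod>e\<in>S. - (f e :: real)) = (-1) ^ card S * (\<Prod>e\<in>S. f e)"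
  by (induct S rule: finite_induct) auto

lemma edge_g_nz: assumes "e \<in> edges g" shows "g (ea e) (eb e) \<noteq> 0 \<or> g (eb e) (ea e) \<noteq> 0"
proof -
  obtain i j where ij: "e = {i, j}" "i \<noteq> j" "g i j \<noteq> 0" using assms unfolding edges_def by auto
  then have "{i, j} = {ea e, eb e}" using edges_prop[OF assms] by simp
  then show ?thesis using ij pair_cases by metis
qed

theorem mainTheorem6:
  fixes g :: "'n::finite \<Rightarrow> 'n \<Rightarrow> real" and tstar :: real
  assumes "signed_graph g" and "graph_connected g"
  shows "dim {v :: real^'n. laplacian (gamma_t g tstar) *v v = 0 \<and> (\<Sum>i\<in>UNIV. v $ i) = 0}
         = order tstar (M_poly g)"
proof -
  have gsym: "\<And>a b. g a b = g b a" and gdiag: "\<And>a. g a a = 0"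
    using assms(1) unfolding signed_graph_def by auto
  define E where "E = edges g"
  define r :: 'n where "r = undefined"
  define ge where "ge e = g (ea e) (eb e)" for e
  define \<beta>0 where "\<beta>0 x = (case x of None \<Rightarrow> 1 | Some e \<Rightarrow> - (if ge e > 0 then ge e else 0))" for x
  define \<beta>1 where "\<beta>1 x = (case x of None \<Rightarrow> 0 | Some e \<Rightarrow> - (if ge e > 0 then 0 else ge e))" for x
  define \<beta>t where "\<beta>t t x = \<beta>0 x + t * \<beta>1 x" for t x
  define C where "C = QM r E \<beta>0"
  define D where "D = QM r E \<beta>1"
  define PP :: "real poly^'n^'n" where "PP = (\<chi> i j. [:C$i$j, D$i$j:])"
  have finE: "finite E" by simp
  have QMt: "QM r E (\<beta>t t) = C + t *\<^sub>R D" for t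
    unfolding \<beta>t_def C_def D_def by (rule QM_affine)
  have gt: "gamma_t g t (ea e) (eb e) = - \<beta>t t (Some e)" for t e
    unfolding gamma_t_def \<beta>t_def \<beta>0_def \<beta>1_def ge_def by auto
  have ew: "edge_weight (gamma_t g t) e = - \<beta>t t (Some e)" for t e
    using gt unfolding edge_weight_def ea_def eb_def by simp
  have bt0: "\<beta>t t None = 1" for t by (simp add: \<beta>t_def \<beta>0_def \<beta>1_def)
  have wsym: "gamma_t g t a b = gamma_t g t b a" for t a b unfolding gamma_t_def using gsym[of a b] by simp
  have wdiag: "gamma_t g t a a = 0" for t a unfolding gamma_t_def using gdiag by simp
  have wsupp: "gamma_t g t a b \<noteq> 0 \<Longrightarrow> g a b \<noteq> 0" for t a b unfolding gamma_t_def by auto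
  have edgE: "\<And>e. e \<in> E \<Longrightarrow> ea e \<noteq> eb e \<and> e = {ea e, eb e}" using edges_prop E_def by blast
  have ST: "spanning_trees E = {S. S \<subseteq> E \<and> card S = CARD('n) - 1 \<and> connected_by S}"
    unfolding spanning_trees_def by auto
  have polyPP: "poly (det PP) t = det (QM r E (\<beta>t t))" for t
    unfolding poly_det PP_def QMt by (rule arg_cong[of _ _ det]) (simp add: vec_eq_iff)
  have detQ: "det (QM r E (\<beta>t t)) = (\<Sum>S\<in>spanning_trees E. \<Prod>e\<in>S. \<beta>t t (Some e))" for t
    unfolding ST by (rule CB) (use edgE bt0 in auto)
  have prodneg: "(\<Prod>e\<in>S. \<beta>t t (Some e)) = (-1) ^ (CARD('n) - 1) * (\<Prod>e\<in>S. edge_weight (gamma_t g t) e)"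
    if "S \<in> spanning_trees E" for S t
  proof -
    have "card S = CARD('n) - 1" using that unfolding spanning_trees_def by simp
    then show ?thesis unfolding ew using prod_neg[of S "\<lambda>e. \<beta>t t (Some e)"] by simp
  qed
  have polyM: "poly (M_poly g) t = (\<Sum>S\<in>spanning_trees E. \<Prod>e\<in>S. edge_weight (gamma_t g t) e)" for t
  proof -
    have "poly (edge_weight (gamma_poly g) e) t = edge_weight (gamma_t g t) e" for e
      unfolding edge_weight_def gamma_poly_def gamma_t_def by (simp add: mult.commute)
    then show ?thesis unfolding M_poly_def M_def E_def by (simp add: poly_sum poly_prod)
  qed
  have PPeq: "det PP = smult ((-1) ^ (CARD('n) - 1)) (M_poly g)"
  proof (rule poly_eq_poly_eq_iff[THEN iffD1], rule ext)
    fix t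
    show "poly (det PP) t = poly (smult ((-1) ^ (CARD('n) - 1)) (M_poly g)) t"
      unfolding polyPP detQ polyM by (simp add: prodneg sum_distrib_left polyM)
  qed
  have nz: "det PP \<noteq> 0"
  proof -
    let ?Q = "QM r E (\<beta>t (-1))"
    have "det ?Q \<noteq> 0" unfolding det_nz_iff_ker
    proof (intro allI impI)
      fix y assume Qy: "?Q *v y = 0"
      have "y \<in> {v. ?Q *v v = 0}" using Qy by simp
      also have "{v. ?Q *v v = 0} = {v. laplacian (gamma_t g (-1)) *v v = 0 \<and> v $ r = 0}"
        unfolding E_def by (rule null_QM[where g=g]) (use wsym wdiag wsupp bt0 gt in \<open>auto simp: E_def\<close>)
      finally have yr: "y $ r = 0" by simp
      have "0 = y \<bullet> (?Q *v y)" using Qy by simp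
      also have "\<dots> = (\<Sum>x\<in>XX E. \<beta>t (-1) x * (vv r x \<bullet> y)\<^sup>2)" by (rule QM_quad)
      also have "\<dots> = - (\<Sum>e\<in>E. (- \<beta>t (-1) (Some e)) * (cvec r e \<bullet> y)\<^sup>2)"
        using yr by (simp add: sum_XX[OF finE] vv_def bt0 inner_axis1 sum_negf)
      finally have s0: "(\<Sum>e\<in>E. (- \<beta>t (-1) (Some e)) * (cvec r e \<bullet> y)\<^sup>2) = 0" by simp
      have pos: "- \<beta>t (-1) (Some e) > 0" if "e \<in> E" for e
      proof -
        have "ge e \<noteq> 0" using edge_g_nz[of e g] that gsym unfolding E_def ge_def by metis
        then show ?thesis unfolding \<beta>t_def \<beta>0_def \<beta>1_def by auto
      qed
      have "\<forall>e\<in>E. (- \<beta>t (-1) (Some e)) * (cvec r e \<bullet> y)\<^sup>2 = 0"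
      proof -
        have nn: "0 \<le> (- \<beta>t (-1) (Some e)) * (cvec r e \<bullet> y)\<^sup>2" if "e \<in> E" for e
          using pos[OF that] by (intro mult_nonneg_nonneg) auto
        show ?thesis
          using sum_nonneg_eq_0_iff[OF finE, of "\<lambda>e. (- \<beta>t (-1) (Some e)) * (cvec r e \<bullet> y)\<^sup>2", OF nn] s0
          by simp
      qed
      then have "cvec r e \<bullet> y = 0" if "e \<in> E" for e using pos[OF that] that by auto
      then have "y $ ea e = y $ eb e" if "e \<in> E" for e using inner_cvec0[OF yr] that by simp
      then have "y $ r = y $ v" for v
        using propagate[OF edgE, where z="\<lambda>v. y $ v"] assms(2)
        unfolding graph_connected_def E_def connected_by_def by blast
      then show "y = 0" using yr unfolding vec_eq_iff by simp
    qed
    then have "poly (det PP) (-1) \<noteq> 0" using polyPP by simp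
    then show ?thesis by auto
  qed
  have symA: "transpose (C + tstar *\<^sub>R D) = C + tstar *\<^sub>R D"
    unfolding QMt[symmetric] by (rule QM_sym)
  have Dq: "D *v x = 0" if "x \<bullet> (D *v x) = 0" for x
    unfolding D_def
  proof (rule QM_psd_ker[OF _ finE])
    show "\<beta>1 xa \<ge> 0" for xa unfolding \<beta>1_def by (auto split: option.splits)
    show "x \<bullet> (QM r E \<beta>1 *v x) = 0" using that D_def by simp
  qed
  have "order tstar (M_poly g) = order tstar (det PP)"
    unfolding PPeq by (simp add: order_smult)
  also have "\<dots> = dim {x. (C + tstar *\<^sub>R D) *v x = 0}"
    using pencil_order[of C tstar D, OF symA Dq] nz unfolding PP_def by blast
  also have "{x. (C + tstar *\<^sub>R D) *v x = 0} = {v. laplacian (gamma_t g tstar) *v v = 0 \<and> v $ r = 0}"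
    unfolding QMt[symmetric] E_def
    by (rule null_QM[where g=g]) (use wsym wdiag wsupp bt0 gt in \<open>auto simp: E_def\<close>)
  also have "dim \<dots> = dim {v. laplacian (gamma_t g tstar) *v v = 0 \<and> (\<Sum>i\<in>UNIV. v $ i) = 0}"
    by (rule dim_eq[symmetric]) (rule lap_one)
  finally show ?thesis by simp
qed


end
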